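(* Let $\mathcal{A}$ be an $\alpha$-approximation algorithm ($\alpha\ge 1$) for the single-machine non-preemptive scheduling problem with release times and delivery times (problem $1|r_j|L_{\max}$ in the delivery-time model). Let $G$ be the dependency graph produced by the following procedure: for each semaphore $s_k$, let $\mathbf{T}_k=\{\tau_i:\sigma_i=s_k\}$; for each $\tau_i\in\mathbf{T}_k$ create a job $J_i$ with release time $r_i=C_{i,1}$, processing time $p_i=A_{i,1}$ and delivery time $q_i=C_{i,2}$; apply $\mathcal{A}$ to these jobs to obtain a non-preemptive single-machine schedule $\rho_k$; let $\pi_k$ be the order in which $\rho_k$ executes the jobs, and include the edge $(A_{i,1},A_{j,1})$ whenever $J_j$ is executed immediately after $J_i$ (not necessarily contiguously in time) in $\rho_k$; together with the edges $(C_{i,1},A_{i,1}),(A_{i,1},C_{i,2})$ for all tasks, this defines $G$. Then $len(G)\le \alpha\cdot len(G^* )$.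
   Context: Task model: a set $\mathbf{T}$ of $N$ tasks. Each task $\tau_i$ releases exactly one job at time $0$, consisting of three subjobs executed sequentially in this order: a first non-critical section of execution time $C_{i,1}\ge 0$, a critical section of execution time $A_{i,1}\ge 0$ guarded by a binary semaphore $\sigma_i\in\{s_1,\dots,s_z\}$ (each task uses exactly one semaphore), and a second non-critical section of execution time $C_{i,2}\ge 0$. Dependency graph: a dependency graph $G$ of $\mathbf{T}$ is a directed graph whose vertices are the $3N$ subjobs $C_{i,1},A_{i,1},C_{i,2}$, weighted by their execution times, containing the edges $(C_{i,1},A_{i,1})$ and $(A_{i,1},C_{i,2})$ for every $i$, and, for each semaphore $s_k$, a total order $\pi_k$ on $\mathbf{T}_k$ together with the edges $(A_{i,1},A_{j,1})$ whenever $\pi_k(\tau_i)=\pi_k(\tau_j)-1$ (no other edges). The length of a path is the sum of the weights of its vertices; $len(G)$ is the maximum length of a path in $G$. $G^*$ denotes a dependency graph minimizing $len(G)$. Delivery-time model of $1|r_j|L_{\max}$: a single machine processes jobs $J_j$ with release time $r_j\ge0$, processing time $p_j\ge 0$ and delivery time $q_j\ge 0$ non-preemptively, no job starting before its release time; if $J_j$ completes at time $c_j$, its result is delivered at $c_j+q_j$; the objective is to minimize $\max_j (c_j+q_j)$. An $\alpha$-approximation algorithm always returns a schedule whose objective is at most $\alpha$ times the optimum. *)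

theory Defs
  imports Complex_Main
begin

text \<open>A non-preemptive single-machine schedule
is given by the execution order (a list enumerating J) together with start
times s; consecutive jobs in the order do not overlap and no job starts before
its release time.\<close>

type_synonym schedule = "nat list \<times> (nat \<Rightarrow> real)"

definition feasible_schedule ::
  "nat set \<Rightarrow> (nat \<Rightarrow> real) \<Rightarrow> (nat \<Rightarrow> real) \<Rightarrow> schedule \<Rightarrow> bool" where
  "feasible_schedule J r p sch \<longleftrightarrow>
     (let ord = fst sch; s = snd sch in
        distinct ord \<and> set ord = J \<and>
        (\<forall>j\<in>J. r j \<le> s j) \<and>
        (\<forall>n. Suc n < length ord \<longrightarrow> s (ord ! n) + p (ord ! n) \<le> s (ord ! Suc n)))"

definition lmax_obj ::
  "nat set \<Rightarrow> (nat \<Rightarrow> real) \<Rightarrow> (nat \<Rightarrow> real) \<Rightarrow> schedule \<Rightarrow> real" where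
  "lmax_obj J p q sch = Max (insert 0 ((\<lambda>j. snd sch j + p j + q j) ` J))"

definition lmax_opt ::
  "nat set \<Rightarrow> (nat \<Rightarrow> real) \<Rightarrow> (nat \<Rightarrow> real) \<Rightarrow> (nat \<Rightarrow> real) \<Rightarrow> real" where
  "lmax_opt J r p q = Inf {lmax_obj J p q sch | sch. feasible_schedule J r p sch}"

definition approx_alg ::
  "real \<Rightarrow> (nat set \<Rightarrow> (nat \<Rightarrow> real) \<Rightarrow> (nat \<Rightarrow> real) \<Rightarrow> (nat \<Rightarrow> real) \<Rightarrow> schedule) \<Rightarrow> bool" where
  "approx_alg \<alpha> Alg \<longleftrightarrow>
     (\<forall>J r p q. finite J \<and> (\<forall>j\<in>J. 0 \<le> r j \<and> 0 \<le> p j \<and> 0 \<le> q j) \<longrightarrow>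
        feasible_schedule J r p (Alg J r p q) \<and>
        lmax_obj J p q (Alg J r p q) \<le> \<alpha> * lmax_opt J r p q)"

datatype subjob = SC1 nat | SA nat | SC2 nat

definition task_set :: "nat \<Rightarrow> (nat \<Rightarrow> nat) \<Rightarrow> nat \<Rightarrow> nat set" where
  "task_set N sem k = {i. i < N \<and> sem i = k}"

definition valid_orders :: "nat \<Rightarrow> (nat \<Rightarrow> nat) \<Rightarrow> (nat \<Rightarrow> nat list) \<Rightarrow> bool" where
  "valid_orders N sem \<pi> \<longleftrightarrow> (\<forall>k. distinct (\<pi> k) \<and> set (\<pi> k) = task_set N sem k)"

definition subjobs :: "nat \<Rightarrow> subjob set" where
  "subjobs N = SC1 ` {..<N} \<union> SA ` {..<N} \<union> SC2 ` {..<N}"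

definition weight :: "(nat \<Rightarrow> real) \<Rightarrow> (nat \<Rightarrow> real) \<Rightarrow> (nat \<Rightarrow> real) \<Rightarrow> subjob \<Rightarrow> real" where
  "weight C1 A C2 v = (case v of SC1 i \<Rightarrow> C1 i | SA i \<Rightarrow> A i | SC2 i \<Rightarrow> C2 i)"

definition dep_edge :: "nat \<Rightarrow> (nat \<Rightarrow> nat list) \<Rightarrow> subjob \<Rightarrow> subjob \<Rightarrow> bool" where
  "dep_edge N \<pi> u v \<longleftrightarrow>
     (\<exists>i<N. u = SC1 i \<and> v = SA i) \<or>
     (\<exists>i<N. u = SA i \<and> v = SC2 i) \<or>
     (\<exists>k i j. u = SA i \<and> v = SA j \<and>
        (\<exists>n. Suc n < length (\<pi> k) \<and> \<pi> k ! n = i \<and> \<pi> k ! Suc n = j))"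

definition is_path :: "nat \<Rightarrow> (nat \<Rightarrow> nat list) \<Rightarrow> subjob list \<Rightarrow> bool" where
  "is_path N \<pi> ps \<longleftrightarrow> ps \<noteq> [] \<and> distinct ps \<and> set ps \<subseteq> subjobs N \<and>
     (\<forall>n. Suc n < length ps \<longrightarrow> dep_edge N \<pi> (ps ! n) (ps ! Suc n))"

definition path_len :: "(nat \<Rightarrow> real) \<Rightarrow> (nat \<Rightarrow> real) \<Rightarrow> (nat \<Rightarrow> real) \<Rightarrow> subjob list \<Rightarrow> real" where
  "path_len C1 A C2 ps = sum_list (map (weight C1 A C2) ps)"

definition graph_len ::
  "nat \<Rightarrow> (nat \<Rightarrow> real) \<Rightarrow> (nat \<Rightarrow> real) \<Rightarrow> (nat \<Rightarrow> real) \<Rightarrow> (nat \<Rightarrow> nat list) \<Rightarrow> real" where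
  "graph_len N C1 A C2 \<pi> = Max (insert 0 {path_len C1 A C2 ps | ps. is_path N \<pi> ps})"

definition alg_orders ::
  "(nat set \<Rightarrow> (nat \<Rightarrow> real) \<Rightarrow> (nat \<Rightarrow> real) \<Rightarrow> (nat \<Rightarrow> real) \<Rightarrow> schedule) \<Rightarrow>
   nat \<Rightarrow> (nat \<Rightarrow> nat) \<Rightarrow> (nat \<Rightarrow> real) \<Rightarrow> (nat \<Rightarrow> real) \<Rightarrow> (nat \<Rightarrow> real) \<Rightarrow> nat \<Rightarrow> nat list" where
  "alg_orders Alg N sem C1 A C2 k = fst (Alg (task_set N sem k) C1 A C2)"

end

theory Submission
  imports Defs
begin

lemma chain_bound:
  fixes w b :: "'a \<Rightarrow> real"
  assumes "ps \<noteq> []" "set ps \<subseteq> S" "\<forall>v\<in>S. w v \<le> b v"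
    "\<forall>u v. u \<in> S \<longrightarrow> v \<in> S \<longrightarrow> E u v \<longrightarrow> b u + w v \<le> b v"
    "\<forall>n. Suc n < length ps \<longrightarrow> E (ps!n) (ps!Suc n)"
  shows "sum_list (map w ps) \<le> b (last ps)"
  using assms
proof (induction ps rule: rev_induct)
  case Nil then show ?case by simp
next
  case (snoc x xs)
  show ?case
  proof (cases "xs = []")
    case True then show ?thesis using snoc.prems by simp
  next
    case False
    have e: "\<forall>n. Suc n < length xs \<longrightarrow> E (xs!n) (xs!Suc n)"
    proof (intro allI impI)
      fix n assume "Suc n < length xs"
      then show "E (xs!n) (xs!Suc n)" using snoc.prems(5)[rule_format, of n] by (simp add: nth_append)
    qed
    have ih: "sum_list (map w xs) \<le> b (last xs)"
      using snoc.IH[OF False _ snoc.prems(3,4) e] snoc.prems(2) by simp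
    have "E (last xs) x" using snoc.prems(5)[rule_format, of "length xs - 1"] False
      by (simp add: nth_append last_conv_nth)
    moreover have "last xs \<in> S" "x \<in> S" using snoc.prems(2) False by auto
    ultimately have "b (last xs) + w x \<le> b x" using snoc.prems(4) by blast
    then show ?thesis using ih by simp
  qed
qed

lemma finite_subjobs: "finite (subjobs N)" by (simp add: subjobs_def)

lemma finite_paths: "finite {ps. is_path N \<pi> ps}"
proof (rule finite_subset)
  show "{ps. is_path N \<pi> ps} \<subseteq> {xs. set xs \<subseteq> subjobs N \<and> length xs \<le> card (subjobs N)}"
  proof
    fix ps assume "ps \<in> {ps. is_path N \<pi> ps}"
    then have "distinct ps" "set ps \<subseteq> subjobs N" by (auto simp: is_path_def)
    then show "ps \<in> {xs. set xs \<subseteq> subjobs N \<and> length xs \<le> card (subjobs N)}"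
      using distinct_card[of ps] card_mono[OF finite_subjobs[of N]] by (metis mem_Collect_eq)
  qed
  show "finite {xs. set xs \<subseteq> subjobs N \<and> length xs \<le> card (subjobs N)}"
    by (rule finite_lists_length_le[OF finite_subjobs])
qed

lemma finite_plens: "finite (insert 0 {path_len C1 A C2 ps | ps. is_path N \<pi> ps})"
  using finite_paths by simp

lemma path_le_len: "is_path N \<pi> ps \<Longrightarrow> path_len C1 A C2 ps \<le> graph_len N C1 A C2 \<pi>"
  unfolding graph_len_def by (rule Max_ge[OF finite_plens]) blast

lemma len_nonneg: "0 \<le> graph_len N C1 A C2 \<pi>"
  unfolding graph_len_def by (rule Max_ge[OF finite_plens]) blast

lemma graph_len_le:
  assumes "\<forall>ps. is_path N \<pi> ps \<longrightarrow> path_len C1 A C2 ps \<le> X" "0 \<le> X"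
  shows "graph_len N C1 A C2 \<pi> \<le> X"
  unfolding graph_len_def using assms by (subst Max_le_iff[OF finite_plens]) auto

lemma is_path_snoc:
  assumes "is_path N \<pi> xs" "x \<notin> set xs" "x \<in> subjobs N" "dep_edge N \<pi> (last xs) x"
  shows "is_path N \<pi> (xs @ [x])"
  unfolding is_path_def
proof (intro conjI allI impI)
  show "xs @ [x] \<noteq> []" by simp
  show "distinct (xs @ [x])" using assms(1,2) by (simp add: is_path_def)
  show "set (xs @ [x]) \<subseteq> subjobs N" using assms(1,3) by (simp add: is_path_def)
  fix n assume n: "Suc n < length (xs@[x])"
  show "dep_edge N \<pi> ((xs@[x])!n) ((xs@[x])!Suc n)"
  proof (cases "Suc n < length xs")
    case True then show ?thesis using assms(1) by (simp add: is_path_def nth_append)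
  next
    case False
    then have sn: "Suc n = length xs" using n by simp
    have ne: "xs \<noteq> []" using assms(1) by (simp add: is_path_def)
    have "n = length xs - 1" using sn by simp
    then have "last xs = xs ! n" using ne by (simp add: last_conv_nth)
    then show ?thesis using assms(4) sn by (simp add: nth_append)
  qed
qed

lemma is_path_single: "v \<in> subjobs N \<Longrightarrow> is_path N \<pi> [v]"
  by (simp add: is_path_def)

lemma path_C1A: "i < N \<Longrightarrow> is_path N \<pi> [SC1 i, SA i]"
  using is_path_snoc[of N \<pi> "[SC1 i]" "SA i"] by (simp add: is_path_def subjobs_def dep_edge_def)

fun asap :: "nat list \<Rightarrow> (nat\<Rightarrow>real) \<Rightarrow> (nat\<Rightarrow>real) \<Rightarrow> nat \<Rightarrow> real" where
  "asap ord r p 0 = r (ord!0)"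
| "asap ord r p (Suc n) = max (r (ord ! Suc n)) (asap ord r p n + p (ord!n))"

lemma asap_ge: "r (ord!n) \<le> asap ord r p n"
  by (cases n) auto

lemma task_set_finite: "finite (task_set N sem k)"
  by (rule finite_subset[of _ "{..<N}"]) (auto simp: task_set_def)

lemma obj_nonneg: "finite J \<Longrightarrow> 0 \<le> lmax_obj J p q sch"
  unfolding lmax_obj_def by (rule Max_ge) auto

lemma opt_le_len:
  assumes vo: "valid_orders N sem \<pi>"
  shows "lmax_opt (task_set N sem k) C1 A C2 \<le> graph_len N C1 A C2 \<pi>"
proof -
  let ?o = "\<pi> k"
  let ?J = "task_set N sem k"
  have d: "distinct ?o" and so: "set ?o = ?J" using vo by (auto simp: valid_orders_def)
  have lt: "\<And>n. n < length ?o \<Longrightarrow> ?o!n < N" using so nth_mem by (fastforce simp: task_set_def)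
  define S where "S = asap ?o C1 A"
  have key: "n < length ?o \<Longrightarrow> \<exists>ps. is_path N \<pi> ps \<and> last ps = SA (?o!n) \<and>
      path_len C1 A C2 ps = S n + A (?o!n) \<and>
      (\<forall>v\<in>set ps. (\<exists>j. v = SC1 j) \<or> (\<exists>m\<le>n. v = SA (?o!m)))" for n
  proof (induction n)
    case 0
    show ?case
      by (rule exI[of _ "[SC1 (?o!0), SA (?o!0)]"])
        (use 0 lt path_C1A in \<open>auto simp: S_def path_len_def weight_def\<close>)
  next
    case (Suc n)
    then obtain ps where ps: "is_path N \<pi> ps" "last ps = SA (?o!n)"
      "path_len C1 A C2 ps = S n + A (?o!n)"
      "\<forall>v\<in>set ps. (\<exists>j. v = SC1 j) \<or> (\<exists>m\<le>n. v = SA (?o!m))" by auto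
    let ?j = "?o ! Suc n"
    have jN: "?j < N" using lt Suc.prems .
    show ?case
    proof (cases "S n + A (?o!n) \<le> C1 ?j")
      case True
      show ?thesis
        by (rule exI[of _ "[SC1 ?j, SA ?j]"])
          (use True jN path_C1A in \<open>auto simp: S_def path_len_def weight_def\<close>)
    next
      case False
      have nin: "SA ?j \<notin> set ps"
      proof
        assume "SA ?j \<in> set ps"
        then obtain m where "m \<le> n" "?j = ?o ! m" using ps(4) by fastforce
        then show False using d Suc.prems nth_eq_iff_index_eq[OF d, of "Suc n" m] by auto
      qed
      have e: "dep_edge N \<pi> (last ps) (SA ?j)"
        unfolding dep_edge_def using ps(2) Suc.prems by blast
      have p2: "is_path N \<pi> (ps @ [SA ?j])"
        by (rule is_path_snoc[OF ps(1) nin _ e]) (use jN in \<open>simp add: subjobs_def\<close>)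
      show ?thesis
        apply (rule exI[of _ "ps @ [SA ?j]"])
        using p2 ps(3,4) False by (auto simp: S_def path_len_def weight_def le_Suc_eq)
    qed
  qed
  define idx where "idx j = (THE n. n < length ?o \<and> ?o!n = j)" for j
  have idx: "n < length ?o \<Longrightarrow> idx (?o!n) = n" for n
    unfolding idx_def by (rule the_equality) (use nth_eq_iff_index_eq[OF d] in auto)
  define sch where "sch = (?o, \<lambda>j. S (idx j))"
  have feas: "feasible_schedule ?J C1 A sch"
    unfolding feasible_schedule_def sch_def Let_def
  proof (intro conjI ballI allI impI)
    show "distinct (fst (?o, \<lambda>j. S (idx j)))" using d by simp
    show "set (fst (?o, \<lambda>j. S (idx j))) = ?J" using so by simp
  next
    fix j assume "j \<in> ?J"
    then obtain n where "n < length ?o" "j = ?o!n" using so by (metis in_set_conv_nth)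
    then show "C1 j \<le> snd (?o, \<lambda>j. S (idx j)) j" using idx asap_ge by (simp add: S_def)
  next
    fix n assume "Suc n < length (fst (?o, \<lambda>j. S (idx j)))"
    then show "snd (?o, \<lambda>j. S (idx j)) (fst (?o, \<lambda>j. S (idx j)) ! n) + A (fst (?o, \<lambda>j. S (idx j)) ! n)
       \<le> snd (?o, \<lambda>j. S (idx j)) (fst (?o, \<lambda>j. S (idx j)) ! Suc n)"
      using idx by (simp add: S_def)
  qed
  have all: "\<forall>j\<in>?J. snd sch j + A j + C2 j \<le> graph_len N C1 A C2 \<pi>"
  proof
    fix j assume "j \<in> ?J"
    then obtain n where n: "n < length ?o" "j = ?o!n" using so by (metis in_set_conv_nth)
    then obtain ps where ps: "is_path N \<pi> ps" "last ps = SA (?o!n)"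
      "path_len C1 A C2 ps = S n + A (?o!n)"
      "\<forall>v\<in>set ps. (\<exists>j. v = SC1 j) \<or> (\<exists>m\<le>n. v = SA (?o!m))" using key by blast
    have nin: "SC2 j \<notin> set ps" using ps(4) by auto
    have e: "dep_edge N \<pi> (last ps) (SC2 j)" unfolding dep_edge_def using ps(2) n lt by blast
    have p2: "is_path N \<pi> (ps @ [SC2 j])"
      by (rule is_path_snoc[OF ps(1) nin _ e]) (use n lt in \<open>simp add: subjobs_def\<close>)
    have "path_len C1 A C2 (ps @ [SC2 j]) = S (idx j) + A j + C2 j"
      using ps(3) n idx by (simp add: path_len_def weight_def)
    then show "snd sch j + A j + C2 j \<le> graph_len N C1 A C2 \<pi>"
      using path_le_len[OF p2, of C1 A C2] by (simp add: sch_def)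
  qed
  have obj: "lmax_obj ?J A C2 sch \<le> graph_len N C1 A C2 \<pi>"
    unfolding lmax_obj_def using all len_nonneg task_set_finite by (subst Max_le_iff) auto
  have "lmax_opt ?J C1 A C2 \<le> lmax_obj ?J A C2 sch"
    unfolding lmax_opt_def
  proof (rule cInf_lower)
    show "lmax_obj ?J A C2 sch \<in> {lmax_obj ?J A C2 sch |sch. feasible_schedule ?J C1 A sch}"
      using feas by blast
    show "bdd_below {lmax_obj ?J A C2 sch |sch. feasible_schedule ?J C1 A sch}"
      by (rule bdd_belowI[of _ 0]) (auto intro: obj_nonneg task_set_finite)
  qed
  then show ?thesis using obj by linarith
qed

theorem mainTheorem7:
  fixes N :: nat and sem :: "nat \<Rightarrow> nat" and C1 A C2 :: "nat \<Rightarrow> real"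
    and \<alpha> :: real
    and Alg :: "nat set \<Rightarrow> (nat \<Rightarrow> real) \<Rightarrow> (nat \<Rightarrow> real) \<Rightarrow> (nat \<Rightarrow> real) \<Rightarrow> schedule"
  assumes "1 \<le> \<alpha>"
    and "approx_alg \<alpha> Alg"
    and "\<forall>i<N. 0 \<le> C1 i \<and> 0 \<le> A i \<and> 0 \<le> C2 i"
  shows "\<forall>\<pi>. valid_orders N sem \<pi> \<longrightarrow>
           graph_len N C1 A C2 (alg_orders Alg N sem C1 A C2) \<le> \<alpha> * graph_len N C1 A C2 \<pi>"
proof (intro allI impI)
  fix \<pi> assume vo: "valid_orders N sem \<pi>"
  define sch where "sch k = Alg (task_set N sem k) C1 A C2" for k
  have ap: "feasible_schedule (task_set N sem k) C1 A (sch k) \<and>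
      lmax_obj (task_set N sem k) A C2 (sch k) \<le> \<alpha> * lmax_opt (task_set N sem k) C1 A C2" for k
  proof -
    have "finite (task_set N sem k) \<and> (\<forall>j\<in>task_set N sem k. 0 \<le> C1 j \<and> 0 \<le> A j \<and> 0 \<le> C2 j)"
      using assms(3) task_set_finite by (auto simp: task_set_def)
    then show ?thesis using assms(2) unfolding approx_alg_def sch_def by blast
  qed
  define s where "s i = snd (sch (sem i)) i" for i
  define b where "b v = (case v of SC1 i \<Rightarrow> C1 i | SA i \<Rightarrow> s i + A i | SC2 i \<Rightarrow> s i + A i + C2 i)" for v
  have inJ: "i < N \<Longrightarrow> i \<in> task_set N sem (sem i)" for i by (simp add: task_set_def)
  have sge: "i < N \<Longrightarrow> C1 i \<le> s i" for i
    using ap[of "sem i"] inJ[of i] by (auto simp: feasible_schedule_def Let_def s_def)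
  have objge: "i < N \<Longrightarrow> s i + A i + C2 i \<le> \<alpha> * graph_len N C1 A C2 \<pi>" for i
  proof -
    assume i: "i < N"
    have "s i + A i + C2 i \<le> lmax_obj (task_set N sem (sem i)) A C2 (sch (sem i))"
      unfolding lmax_obj_def s_def
      by (rule Max_ge) (use task_set_finite inJ[OF i] in auto)
    also have "\<dots> \<le> \<alpha> * lmax_opt (task_set N sem (sem i)) C1 A C2" using ap by blast
    also have "\<dots> \<le> \<alpha> * graph_len N C1 A C2 \<pi>"
      using opt_le_len[OF vo] assms(1) by (simp add: mult_left_mono)
    finally show ?thesis .
  qed
  show "graph_len N C1 A C2 (alg_orders Alg N sem C1 A C2) \<le> \<alpha> * graph_len N C1 A C2 \<pi>"
  proof (rule graph_len_le, intro allI impI)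
    show "0 \<le> \<alpha> * graph_len N C1 A C2 \<pi>" using assms(1) len_nonneg by simp
  next
    fix ps assume p: "is_path N (alg_orders Alg N sem C1 A C2) ps"
    have cb: "sum_list (map (weight C1 A C2) ps) \<le> b (last ps)"
    proof (rule chain_bound[where S = "subjobs N" and E = "dep_edge N (alg_orders Alg N sem C1 A C2)"])
      show "ps \<noteq> []" "set ps \<subseteq> subjobs N"
        "\<forall>n. Suc n < length ps \<longrightarrow> dep_edge N (alg_orders Alg N sem C1 A C2) (ps ! n) (ps ! Suc n)"
        using p by (auto simp: is_path_def)
      show "\<forall>v\<in>subjobs N. weight C1 A C2 v \<le> b v"
        using sge assms(3) by (fastforce simp: subjobs_def weight_def b_def)
      show "\<forall>u v. u \<in> subjobs N \<longrightarrow> v \<in> subjobs N \<longrightarrow> dep_edge N (alg_orders Alg N sem C1 A C2) u v \<longrightarrow>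
          b u + weight C1 A C2 v \<le> b v"
      proof (intro allI impI)
        fix u v assume "u \<in> subjobs N" "v \<in> subjobs N" and e: "dep_edge N (alg_orders Alg N sem C1 A C2) u v"
        show "b u + weight C1 A C2 v \<le> b v"
          using e unfolding dep_edge_def
        proof (elim disjE exE conjE)
          fix i assume "i < N" "u = SC1 i" "v = SA i"
          then show ?thesis using sge by (simp add: b_def weight_def)
        next
          fix i assume "i < N" "u = SA i" "v = SC2 i"
          then show ?thesis by (simp add: b_def weight_def)
        next
          fix k i j n assume uv: "u = SA i" "v = SA j"
            and n: "Suc n < length (alg_orders Alg N sem C1 A C2 k)"
            "alg_orders Alg N sem C1 A C2 k ! n = i" "alg_orders Alg N sem C1 A C2 k ! Suc n = j"
          let ?o = "fst (sch k)"
          have o: "alg_orders Alg N sem C1 A C2 k = ?o" by (simp add: alg_orders_def sch_def)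
          have f: "feasible_schedule (task_set N sem k) C1 A (sch k)" using ap by blast
          have so: "set ?o = task_set N sem k" using f by (simp add: feasible_schedule_def Let_def)
          have "i \<in> set ?o" "j \<in> set ?o" using n o nth_mem by (metis Suc_lessD)+
          then have sk: "sem i = k" "sem j = k" using so by (auto simp: task_set_def)
          have "\<forall>n. Suc n < length ?o \<longrightarrow> snd (sch k) (?o ! n) + A (?o ! n) \<le> snd (sch k) (?o ! Suc n)"
            using f by (simp add: feasible_schedule_def Let_def)
          then have "snd (sch k) (?o ! n) + A (?o ! n) \<le> snd (sch k) (?o ! Suc n)"
            using n o by metis
          then show ?thesis using uv n o sk by (simp add: b_def weight_def s_def)
        qed
      qed
    qed
    have "last ps \<in> subjobs N" using p by (auto simp: is_path_def)
    then have "b (last ps) \<le> \<alpha> * graph_len N C1 A C2 \<pi>"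
      using objge sge assms(3) by (fastforce simp: subjobs_def b_def)
    then show "path_len C1 A C2 ps \<le> \<alpha> * graph_len N C1 A C2 \<pi>"
      using cb by (simp add: path_len_def)
  qed
qed

end
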